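(* Let $\pi$ be a probability density on $\mathbb{R}^d$ with $\pi(x)>0$ for all $x$ and $\log\pi\in C^1(\mathbb{R}^d)$, and for $\lambda>0$ let $\pi^{(\lambda)}(x):=\lambda^{-1}\pi(x_1/\lambda,x_2,\dots,x_d)$. Let $\mu_0$ be a symmetric probability density on $\mathbb{R}$ and $\mu(\xi)=\prod_{i=1}^d\mu_0(\xi_i)$, and assume $\mu$ satisfies: there exists $\lambda_0>0$ such that for all $x,y\in\mathbb{R}^d$ and $\lambda<\lambda_0$, $\mu(\delta_\lambda)\ge\mu(\delta)$, where $\delta=y-x$ and $\delta_\lambda=(\lambda(y_1-x_1),y_2-x_2,\dots,y_d-x_d)$; and $\sup_{\xi_1\in\mathbb{R}}\mu_1(\xi_1)<\infty$ where $\mu_1$ is the first marginal of $\mu$. Fix $\sigma>0$ and let $P^B_\lambda$ be the Metropolis--Hastings kernel with target $\pi^{(\lambda)}$ and Barker candidate density $q^B_\lambda(x,y)=\prod_{i=1}^d\frac{2\sigma^{-1}\mu_0((y_i-x_i)/\sigma)}{1+e^{-\partial_i\log\pi^{(\lambda)}(x)(y_i-x_i)}}$; write $P^B=P^B_1$. Assume $\mathrm{Gap}(P^B)>0$. Then $\mathrm{Gap}(P^B_\lambda)=\Theta(\lambda)$ as $\lambda\downarrow0$.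
   Context: Metropolis--Hastings kernel with target $\pi$ and candidate density $q(x,y)$: propose $y\sim q(x,\cdot)$, accept with probability $\min\{1,\pi(y)q(y,x)/(\pi(x)q(x,y))\}$, else stay. $\mathrm{Gap}(P)=\inf_{f\in L^2_{0,1}(\pi)}\frac12\int (f(y)-f(x))^2\pi(dx)P(x,dy)$ with $L^2_{0,1}(\pi)=\{f:\mathbb{E}_\pi f=0,\mathrm{Var}_\pi f=1\}$. $F=\Theta(G)$ as $\lambda\downarrow0$ means $\liminf F/G>0$ and $\limsup F/G<\infty$. $\partial_i$ denotes partial derivative in the $i$-th coordinate. *)

theory Defs
  imports "HOL-Analysis.Analysis"
begin

definition upd_coord :: "real^'d \<Rightarrow> 'd \<Rightarrow> real \<Rightarrow> real^'d" where
  "upd_coord x i t = (\<chi> j. if j = i then t else x $ j)"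

definition partial :: "'d \<Rightarrow> (real^'d \<Rightarrow> real) \<Rightarrow> real^'d \<Rightarrow> real" where
  "partial i f x = deriv (\<lambda>t. f (upd_coord x i t)) (x $ i)"

definition rescale_density :: "'d \<Rightarrow> real \<Rightarrow> (real^'d \<Rightarrow> real) \<Rightarrow> real^'d \<Rightarrow> real" where
  "rescale_density k l p x = p (upd_coord x k (x $ k / l)) / l"

definition mh_accept :: "('a \<Rightarrow> real) \<Rightarrow> ('a \<Rightarrow> 'a \<Rightarrow> real) \<Rightarrow> 'a \<Rightarrow> 'a \<Rightarrow> real" where
  "mh_accept p q x y = min 1 ((p y * q y x) / (p x * q x y))"

definition mh_kernel :: "(real^'d \<Rightarrow> real) \<Rightarrow> (real^'d \<Rightarrow> real^'d \<Rightarrow> real) \<Rightarrow> real^'d \<Rightarrow> (real^'d) measure" where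
  "mh_kernel p q x = measure_of UNIV (sets (borel :: (real^'d) measure))
     (\<lambda>A. (\<integral>\<^sup>+ y\<in>A. ennreal (q x y * mh_accept p q x y) \<partial>lborel)
          + (1 - (\<integral>\<^sup>+ y. ennreal (q x y * mh_accept p q x y) \<partial>lborel)) * indicator A x)"

definition L2_01 :: "(real^'d \<Rightarrow> real) \<Rightarrow> (real^'d \<Rightarrow> real) set" where
  "L2_01 p = {f. let M = density lborel (\<lambda>x. ennreal (p x)) in
       f \<in> borel_measurable borel \<and> integrable M f \<and> integrable M (\<lambda>x. (f x)\<^sup>2) \<and>
       integral\<^sup>L M f = 0 \<and> integral\<^sup>L M (\<lambda>x. (f x - integral\<^sup>L M f)\<^sup>2) = 1}"

definition spectral_gap :: "(real^'d \<Rightarrow> real) \<Rightarrow> (real^'d \<Rightarrow> (real^'d) measure) \<Rightarrow> ennreal" where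
  "spectral_gap p P = (INF f\<in>L2_01 p. (1/2) *
     (\<integral>\<^sup>+ x. ennreal (p x) * (\<integral>\<^sup>+ y. ennreal ((f y - f x)\<^sup>2) \<partial>(P x)) \<partial>lborel))"

definition barker_q :: "real \<Rightarrow> (real \<Rightarrow> real) \<Rightarrow> (real^'d \<Rightarrow> real) \<Rightarrow> real^'d \<Rightarrow> real^'d \<Rightarrow> real" where
  "barker_q \<sigma> \<mu>0 p x y = (\<Prod>i\<in>UNIV. (2 / \<sigma> * \<mu>0 ((y $ i - x $ i) / \<sigma>)) /
       (1 + exp (- partial i (\<lambda>z. ln (p z)) x * (y $ i - x $ i))))"

end

theory Submission
  imports Defs
begin

definition sc :: "'d \<Rightarrow> real \<Rightarrow> real^'d \<Rightarrow> real^'d" where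
  "sc k l u = upd_coord u k (l * u $ k)"

lemma sc_nth: "sc k l u $ i = (if i = k then l * u $ k else u $ i)"
  by (simp add: sc_def upd_coord_def)

lemma sum_Basis_inner: fixes f :: "'a::euclidean_space \<Rightarrow> real"
  assumes "b \<in> Basis" shows "(\<Sum>j\<in>Basis. f j *\<^sub>R j) \<bullet> b = f b"
  using assms by (simp add: inner_sum_left inner_Basis if_distrib sum.delta cong: if_cong)

lemma sc_sum: fixes u :: "real^'d::finite" shows "sc k l u = (\<Sum>j\<in>Basis. ((if j = axis k 1 then l else 1) * (u \<bullet> j)) *\<^sub>R j)"
  apply (rule euclidean_eqI)
  apply (subst sum_Basis_inner, assumption)
  apply (auto simp: Basis_vec_def inner_axis sc_nth axis_eq_axis)
  done

lemma lborel_sc: fixes k :: "'d::finite" assumes "l > 0" shows "lborel = density (distr lborel borel (sc k l)) (\<lambda>_. ennreal l)"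
proof -
  have P: "(\<Prod>j\<in>(Basis::(real^'d) set). \<bar>if j = axis k 1 then l else 1\<bar>) = l"
    proof -
    have "(\<Prod>j\<in>(Basis::(real^'d) set). \<bar>if j = axis k 1 then l else 1\<bar>) = (\<Prod>j\<in>(Basis::(real^'d) set). if j = axis k 1 then l else 1)"
      using assms by (intro prod.cong) auto
    also have "\<dots> = l" by (subst prod.delta) auto
    finally show ?thesis .
  qed
  have c: "\<And>j. j \<in> Basis \<Longrightarrow> (\<lambda>j::real^'d. if j = axis k 1 then l else 1) j \<noteq> 0" using assms by auto
  have e: "(\<lambda>x. 0 + (\<Sum>j\<in>Basis. ((\<lambda>j::real^'d. if j = axis k 1 then l else 1) j * (x \<bullet> j)) *\<^sub>R j)) = sc k l"
    by (rule ext) (simp add: sc_sum)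
  show ?thesis using lborel_affine_euclidean[where t="0::real^'d" and c="\<lambda>j::real^'d. if j = axis k 1 then l else 1", OF c] unfolding e P .
qed


lemma sc_cont: "continuous_on UNIV (sc k l)"
  unfolding sc_sum[abs_def] by (intro continuous_intros)

lemma sc_meas[measurable]: "sc k l \<in> borel_measurable borel"
  by (rule borel_measurable_continuous_onI[OF sc_cont])

lemma sc_sc: "l \<noteq> 0 \<Longrightarrow> sc k l (sc k (1/l) x) = x" "l \<noteq> 0 \<Longrightarrow> sc k (1/l) (sc k l x) = x"
  by (auto simp: vec_eq_iff sc_nth)

lemma sc_diff: "sc k l v - sc k l u = sc k l (v - u)"
  by (auto simp: vec_eq_iff sc_nth algebra_simps)

lemma rescale_sc: "rescale_density k l p x = p (sc k (1/l) x) / l"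
  by (simp add: rescale_density_def sc_def)

lemma nn_integral_sc:
  fixes k :: "'d::finite" and h :: "real^'d \<Rightarrow> ennreal"
  assumes l: "l > 0" and h[measurable]: "h \<in> borel_measurable borel"
  shows "(\<integral>\<^sup>+x. h x \<partial>lborel) = ennreal l * (\<integral>\<^sup>+u. h (sc k l u) \<partial>lborel)"
proof -
  have "(\<integral>\<^sup>+x. h x \<partial>lborel) = (\<integral>\<^sup>+x. h x \<partial>density (distr lborel borel (sc k l)) (\<lambda>_. ennreal l))"
    using arg_cong[of _ _ "\<lambda>M. integral\<^sup>N M h", OF lborel_sc[OF l, of k]] .
  also have "\<dots> = (\<integral>\<^sup>+x. ennreal l * h x \<partial>distr lborel borel (sc k l))"
    by (subst nn_integral_density) auto
  also have "\<dots> = (\<integral>\<^sup>+u. ennreal l * h (sc k l u) \<partial>lborel)"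
    by (subst nn_integral_distr) auto
  also have "\<dots> = ennreal l * (\<integral>\<^sup>+u. h (sc k l u) \<partial>lborel)"
    by (rule nn_integral_cmult) auto
  finally show ?thesis .
qed

lemma upd_coord_line: "upd_coord x i t = x + (t - x $ i) *\<^sub>R axis i 1"
  by (auto simp: vec_eq_iff upd_coord_def axis_def)

lemma upd_coord_same[simp]: "upd_coord x i (x $ i) = x"
  by (auto simp: vec_eq_iff upd_coord_def)

lemma partial_has_deriv:
  assumes d: "\<And>z. (f has_derivative f' z) (at z)"
  shows "((\<lambda>t. f (upd_coord x i t)) has_real_derivative f' (upd_coord x i t) (axis i 1)) (at t)"
proof -
  have l: "((\<lambda>t. upd_coord x i t) has_derivative (\<lambda>h. h *\<^sub>R axis i 1)) (at t)"
    unfolding upd_coord_line[abs_def]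
    by (auto intro!: derivative_eq_intros)
  have "((\<lambda>t. f (upd_coord x i t)) has_derivative (\<lambda>h. f' (upd_coord x i t) (h *\<^sub>R axis i 1))) (at t)"
    using has_derivative_compose[OF l d] by (simp add: o_def)
  moreover have "linear (f' (upd_coord x i t))"
    using d has_derivative_linear by blast
  ultimately have "((\<lambda>t. f (upd_coord x i t)) has_derivative (\<lambda>h. h * f' (upd_coord x i t) (axis i 1))) (at t)"
    by (simp add: linear_scale)
  moreover have "(\<lambda>h. h * f' (upd_coord x i t) (axis i 1)) = (*) (f' (upd_coord x i t) (axis i 1))"
    by (rule ext) simp
  ultimately show ?thesis
    by (simp add: has_field_derivative_def)
qed

lemma partial_eq:
  assumes d: "\<And>z. (f has_derivative f' z) (at z)"
  shows "partial i f x = f' x (axis i 1)"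
  unfolding partial_def
  using DERIV_imp_deriv[OF partial_has_deriv[OF d, of x i "x $ i"]] by simp


lemma sa_borel: "sigma_algebra UNIV (sets (borel :: (real^'d::finite) measure))"
  using sets.sigma_algebra_axioms[of "borel :: (real^'d) measure"] by simp

lemma sets_mh_kernel[simp, measurable_cong]: "sets (mh_kernel p q x) = sets (borel :: (real^'d::finite) measure)"
  unfolding mh_kernel_def by (rule sigma_algebra.sets_measure_of_eq[OF sa_borel])

lemma kernel_nn_integral:
  fixes p :: "real^'d::finite \<Rightarrow> real" and q
  assumes Km[measurable]: "(\<lambda>y. q x y * mh_accept p q x y) \<in> borel_measurable borel"
  and g[measurable]: "g \<in> borel_measurable borel" and g0: "g x = 0"
  shows "(\<integral>\<^sup>+y. g y \<partial>mh_kernel p q x) = (\<integral>\<^sup>+y. g y * ennreal (q x y * mh_accept p q x y) \<partial>lborel)"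
proof -
  define K where "K y = ennreal (q x y * mh_accept p q x y)" for y
  have [measurable]: "K \<in> borel_measurable borel" unfolding K_def by measurable
  define c where "c = 1 - (\<integral>\<^sup>+ y. K y \<partial>lborel)"
  define \<mu> where "\<mu> A = (\<integral>\<^sup>+ y\<in>A. K y \<partial>lborel) + c * indicator A x" for A
  define N where "N = density lborel K"
  have eN: "A \<in> sets borel \<Longrightarrow> emeasure N A = (\<integral>\<^sup>+ y\<in>A. K y \<partial>lborel)" for A
    unfolding N_def by (subst emeasure_density) auto
  have mu: "\<mu> A = emeasure N A + c * indicator A x" if "A \<in> sets borel" for A
    using eN[OF that] unfolding \<mu>_def by simp
  have pos: "positive (sets borel) \<mu>"
    unfolding positive_def \<mu>_def by simp
  have ca: "countably_additive (sets borel) \<mu>"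
    unfolding countably_additive_def
  proof (intro allI impI)
    fix A :: "nat \<Rightarrow> (real^'d) set"
    assume A: "range A \<subseteq> sets borel" "disjoint_family A" "\<Union> (range A) \<in> sets borel"
    have "(\<Sum>i. \<mu> (A i)) = (\<Sum>i. emeasure N (A i) + c * indicator (A i) x)"
      using A(1) by (intro suminf_cong) (auto simp: mu)
    also have "\<dots> = (\<Sum>i. emeasure N (A i)) + (\<Sum>i. c * indicator (A i) x)"
      by (rule suminf_add[symmetric]) auto
    also have "\<dots> = emeasure N (\<Union>i. A i) + c * indicator (\<Union>i. A i) x"
      using A by (subst suminf_emeasure) (auto simp: N_def suminf_indicator)
    also have "\<dots> = \<mu> (\<Union>i. A i)"
      using A(3) by (simp add: mu)
    finally show "(\<Sum>i. \<mu> (A i)) = \<mu> (\<Union> (range A))" .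
  qed
  have eP: "emeasure (mh_kernel p q x) A = \<mu> A" if "A \<in> sets borel" for A
  proof -
    have mk: "mh_kernel p q x = measure_of UNIV (sets borel) \<mu>"
      unfolding mh_kernel_def \<mu>_def[abs_def] c_def K_def by simp
    show ?thesis unfolding mk by (rule emeasure_measure_of_sigma[OF sa_borel pos ca that])
  qed
  define C where "C = UNIV - {x}"
  have [measurable]: "C \<in> sets borel" unfolding C_def by auto
  have D: "density (mh_kernel p q x) (indicator C) = density N (indicator C)"
  proof (rule measure_eqI)
    show "sets (density (mh_kernel p q x) (indicator C)) = sets (density N (indicator C))"
      by (simp add: N_def)
    fix A assume "A \<in> sets (density (mh_kernel p q x) (indicator C))"
    then have A[measurable]: "A \<in> sets borel" by simp
    have "emeasure (density (mh_kernel p q x) (indicator C)) A = emeasure (mh_kernel p q x) (C \<inter> A)"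
      by (rule emeasure_restricted) auto
    also have "\<dots> = emeasure N (C \<inter> A)"
      by (subst eP) (auto simp: mu C_def)
    also have "\<dots> = emeasure (density N (indicator C)) A"
      by (rule emeasure_restricted[symmetric]) (auto simp: N_def)
    finally show "emeasure (density (mh_kernel p q x) (indicator C)) A = emeasure (density N (indicator C)) A" .
  qed
  have "(\<integral>\<^sup>+y. g y \<partial>mh_kernel p q x) = (\<integral>\<^sup>+y. indicator C y * g y \<partial>mh_kernel p q x)"
    by (intro nn_integral_cong) (auto simp: C_def g0 split: split_indicator)
  also have "\<dots> = (\<integral>\<^sup>+y. g y \<partial>density (mh_kernel p q x) (indicator C))"
    by (subst nn_integral_density) auto
  also have "\<dots> = (\<integral>\<^sup>+y. g y \<partial>density N (indicator C))"
    by (simp add: D)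
  also have "\<dots> = (\<integral>\<^sup>+y. indicator C y * g y \<partial>N)"
    by (subst nn_integral_density) (auto simp: N_def)
  also have "\<dots> = (\<integral>\<^sup>+y. K y * (indicator C y * g y) \<partial>lborel)"
    unfolding N_def by (subst nn_integral_density) auto
  also have "\<dots> = (\<integral>\<^sup>+y. g y * K y \<partial>lborel)"
    by (intro nn_integral_cong) (auto simp: C_def g0 mult.commute split: split_indicator)
  finally show ?thesis unfolding K_def .
qed


lemma vec_nth_meas[measurable]: "(\<lambda>x::real^'d::finite. x $ i) \<in> borel_measurable borel"
  by (intro borel_measurable_continuous_onI continuous_intros)

definition Kb :: "real \<Rightarrow> (real \<Rightarrow> real) \<Rightarrow> (real^'d::finite \<Rightarrow> real) \<Rightarrow> real^'d \<Rightarrow> real^'d \<Rightarrow> real" where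
  "Kb \<sigma> \<mu>0 p x y = barker_q \<sigma> \<mu>0 p x y * mh_accept p (barker_q \<sigma> \<mu>0 p) x y"

lemma Kb_meas:
  fixes p :: "real^'d::finite \<Rightarrow> real"
  assumes [measurable]: "p \<in> borel_measurable borel" "\<mu>0 \<in> borel_measurable borel"
    "\<And>i. partial i (\<lambda>z. ln (p z)) \<in> borel_measurable borel"
  shows "(\<lambda>xy. Kb \<sigma> \<mu>0 p (fst xy) (snd xy)) \<in> borel_measurable (lborel \<Otimes>\<^sub>M lborel)"
  unfolding Kb_def barker_q_def mh_accept_def by measurable

lemma Kb_meas2:
  fixes p :: "real^'d::finite \<Rightarrow> real"
  assumes "p \<in> borel_measurable borel" "\<mu>0 \<in> borel_measurable borel"
    "\<And>i. partial i (\<lambda>z. ln (p z)) \<in> borel_measurable borel"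
  shows "(\<lambda>y. Kb \<sigma> \<mu>0 p x y) \<in> borel_measurable borel"
  using measurable_Pair2[OF Kb_meas[OF assms], of x] by simp


lemma sc_linear: "bounded_linear (sc k c)"
proof -
  have "linear (sc k c)"
    by (rule linearI) (auto simp: vec_eq_iff sc_nth algebra_simps)
  then show ?thesis by (simp add: linear_conv_bounded_linear)
qed

lemma sc_axis: "sc k c (axis i 1) = (if i = k then c else 1) *\<^sub>R axis i 1"
  by (auto simp: vec_eq_iff sc_nth axis_def)

lemma partial_blinfun:
  assumes "\<forall>x. (f has_derivative blinfun_apply (D x)) (at x)"
  shows "partial i f x = D x (axis i 1)"
  using assms by (intro partial_eq) auto

lemma partial_blinfun_meas:
  assumes "\<forall>x. (f has_derivative blinfun_apply (D x)) (at x)" "continuous_on UNIV D"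
  shows "partial i f \<in> borel_measurable borel"
proof -
  have "partial i f = (\<lambda>x. D x (axis i 1))"
    using partial_blinfun[OF assms(1)] by auto
  moreover have "continuous_on UNIV (\<lambda>x. D x (axis i 1))"
    by (intro blinfun.continuous_on assms(2) continuous_intros)
  ultimately show ?thesis by (simp add: borel_measurable_continuous_onI)
qed

lemma resc_partial:
  fixes p :: "real^'d::finite \<Rightarrow> real"
  assumes pos: "\<forall>x. p x > 0" and D: "\<forall>x. ((\<lambda>z. ln (p z)) has_derivative blinfun_apply (D x)) (at x)"
    and l: "l > 0"
  shows "partial i (\<lambda>z. ln (rescale_density k l p z)) z
     = (if i = k then 1/l else 1) * partial i (\<lambda>z. ln (p z)) (sc k (1/l) z)"
proof -
  have e: "(\<lambda>z. ln (rescale_density k l p z)) = (\<lambda>z. ln (p (sc k (1/l) z)) - ln l)"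
    using pos l by (intro ext) (simp add: rescale_sc ln_div less_imp_neq[symmetric])
  have d: "((\<lambda>z. ln (rescale_density k l p z)) has_derivative (\<lambda>h. D (sc k (1/l) z) (sc k (1/l) h))) (at z)" for z
  proof -
    have h1: "((\<lambda>z. ln (p (sc k (1/l) z))) has_derivative (\<lambda>h. D (sc k (1/l) z) (sc k (1/l) h))) (at z)"
      using has_derivative_compose[OF bounded_linear_imp_has_derivative[OF sc_linear] D[rule_format]] .
    show ?thesis unfolding e using has_derivative_diff[OF h1 has_derivative_const[of "ln l"]] by simp
  qed
  show ?thesis
    unfolding partial_eq[OF d] partial_blinfun[OF D] sc_axis
    by (simp add: blinfun.scaleR_right)
qed


lemma rescale_sc_sc: "l \<noteq> 0 \<Longrightarrow> rescale_density k l p (sc k l u) = p u / l"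
  by (simp add: rescale_sc sc_sc)

lemma rescale_meas[measurable]: assumes [measurable]: "p \<in> borel_measurable borel"
  shows "rescale_density k l p \<in> borel_measurable borel"
  unfolding rescale_sc[abs_def] by measurable

lemma distr_density_sc:
  fixes p :: "real^'d::finite \<Rightarrow> real"
  assumes [measurable]: "p \<in> borel_measurable borel" and l: "l > 0"
  shows "distr (density lborel (\<lambda>x. ennreal (p x))) borel (sc k l) = density lborel (\<lambda>x. ennreal (rescale_density k l p x))"
proof (rule measure_eqI)
  fix A assume "A \<in> sets (distr (density lborel (\<lambda>x. ennreal (p x))) borel (sc k l))"
  then have [measurable]: "A \<in> sets borel" by simp
  have "emeasure (distr (density lborel (\<lambda>x. ennreal (p x))) borel (sc k l)) A
      = (\<integral>\<^sup>+u. ennreal (p u) * indicator A (sc k l u) \<partial>lborel)"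
  proof -
    have [measurable]: "sc k l -` A \<in> sets borel" using measurable_sets[OF sc_meas, of A k l] by simp
    show ?thesis
      by (subst emeasure_distr, simp, simp, subst emeasure_density) (auto intro!: nn_integral_cong split: split_indicator)
  qed
  also have "\<dots> = (\<integral>\<^sup>+u. ennreal l * (ennreal (rescale_density k l p (sc k l u)) * indicator A (sc k l u)) \<partial>lborel)"
    using l by (intro nn_integral_cong) (simp add: rescale_sc_sc mult.assoc[symmetric] ennreal_mult'[symmetric])
  also have "\<dots> = ennreal l * (\<integral>\<^sup>+u. ennreal (rescale_density k l p (sc k l u)) * indicator A (sc k l u) \<partial>lborel)"
    by (rule nn_integral_cmult) auto
  also have "\<dots> = (\<integral>\<^sup>+x. ennreal (rescale_density k l p x) * indicator A x \<partial>lborel)"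
    by (rule nn_integral_sc[OF l, symmetric]) auto
  also have "\<dots> = emeasure (density lborel (\<lambda>x. ennreal (rescale_density k l p x))) A"
    by (subst emeasure_density) auto
  finally show "emeasure (distr (density lborel (\<lambda>x. ennreal (p x))) borel (sc k l)) A = emeasure (density lborel (\<lambda>x. ennreal (rescale_density k l p x))) A" .
qed simp


lemma L2_transfer:
  fixes p :: "real^'d::finite \<Rightarrow> real"
  assumes [measurable]: "p \<in> borel_measurable borel" and l: "l > 0" and f[measurable]: "f \<in> borel_measurable borel"
  shows "f \<in> L2_01 (rescale_density k l p) \<longleftrightarrow> (\<lambda>u. f (sc k l u)) \<in> L2_01 p"
proof -
  define M where "M = density lborel (\<lambda>x. ennreal (p x))"
  have Md: "density lborel (\<lambda>x. ennreal (rescale_density k l p x)) = distr M borel (sc k l)"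
    unfolding M_def by (rule distr_density_sc[symmetric, OF _ l]) simp
  have sm: "sc k l \<in> measurable M borel" unfolding M_def by simp
  have i1: "integrable (distr M borel (sc k l)) f \<longleftrightarrow> integrable M (\<lambda>u. f (sc k l u))"
    by (rule integrable_distr_eq[OF sm]) simp
  have i2: "integrable (distr M borel (sc k l)) (\<lambda>x. (f x)\<^sup>2) \<longleftrightarrow> integrable M (\<lambda>u. (f (sc k l u))\<^sup>2)"
    by (rule integrable_distr_eq[OF sm]) simp
  have j1: "integral\<^sup>L (distr M borel (sc k l)) f = integral\<^sup>L M (\<lambda>u. f (sc k l u))"
    by (rule integral_distr[OF sm]) simp
  have j2: "integral\<^sup>L (distr M borel (sc k l)) (\<lambda>x. (f x - c)\<^sup>2) = integral\<^sup>L M (\<lambda>u. (f (sc k l u) - c)\<^sup>2)" for c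
    by (rule integral_distr[OF sm]) simp
  have fm: "(\<lambda>u. f (sc k l u)) \<in> borel_measurable borel" by measurable
  show ?thesis
    unfolding L2_01_def Let_def mem_Collect_eq Md[unfolded M_def] i1[unfolded M_def] i2[unfolded M_def]
      j1[unfolded M_def] j2[unfolded M_def]
    using fm f by simp
qed


lemma mh_form:
  fixes a b1 b2 px py :: real
  assumes "px > 0" "py > 0" "a \<ge> 0" "b1 > 0" "b2 > 0"
  shows "(a*b1) * min 1 ((py * (a*b2)) / (px * (a*b1))) = a * min b1 (py * b2 / px)"
proof (cases "a = 0")
  case False
  then have a: "a > 0" using assms by simp
  have "(py * (a*b2)) / (px * (a*b1)) = (py * b2 / px) / b1" using a assms by (simp add: field_simps)
  then have "(a*b1) * min 1 ((py * (a*b2)) / (px * (a*b1))) = a * (b1 * min 1 ((py * b2 / px) / b1))" by simp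
  also have "b1 * min 1 ((py * b2 / px) / b1) = min b1 (py * b2 / px)"
    using assms by (simp add: min_mult_distrib_left field_simps)
  finally show ?thesis .
qed simp

definition Ab :: "real \<Rightarrow> (real \<Rightarrow> real) \<Rightarrow> real^'d::finite \<Rightarrow> real" where
  "Ab \<sigma> \<mu>0 w = (\<Prod>i\<in>UNIV. 2 / \<sigma> * \<mu>0 (w $ i / \<sigma>))"

definition Bb :: "('d::finite \<Rightarrow> real^'d \<Rightarrow> real) \<Rightarrow> real^'d \<Rightarrow> real^'d \<Rightarrow> real" where
  "Bb g u v = (\<Prod>i\<in>UNIV. 1 / (1 + exp (- g i u * (v $ i - u $ i))))"

lemma Bb_pos: "Bb g u v > 0"
  unfolding Bb_def by (intro prod_pos) (auto intro: add_pos_pos)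

lemma Ab_nonneg: "\<sigma> > 0 \<Longrightarrow> \<forall>t. \<mu>0 t \<ge> 0 \<Longrightarrow> Ab \<sigma> \<mu>0 w \<ge> 0"
  unfolding Ab_def by (intro prod_nonneg) auto

lemma Ab_sym: "\<forall>t. \<mu>0 (- t) = \<mu>0 t \<Longrightarrow> Ab \<sigma> \<mu>0 (- w) = Ab \<sigma> \<mu>0 w"
  unfolding Ab_def by (intro prod.cong) (auto simp: minus_divide_left[symmetric])

lemma barker_AB: "barker_q \<sigma> \<mu>0 p u v = Ab \<sigma> \<mu>0 (v - u) * Bb (\<lambda>i. partial i (\<lambda>z. ln (p z))) u v"
  unfolding barker_q_def Ab_def Bb_def prod.distrib[symmetric] by (intro prod.cong) auto

lemma barker_AB_resc:
  fixes p :: "real^'d::finite \<Rightarrow> real"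
  assumes pos: "\<forall>x. p x > 0" and D: "\<forall>x. ((\<lambda>z. ln (p z)) has_derivative blinfun_apply (D x)) (at x)"
    and l: "l > 0"
  shows "barker_q \<sigma> \<mu>0 (rescale_density k l p) (sc k l u) (sc k l v)
     = Ab \<sigma> \<mu>0 (sc k l (v - u)) * Bb (\<lambda>i. partial i (\<lambda>z. ln (p z))) u v"
  unfolding barker_q_def Ab_def Bb_def prod.distrib[symmetric] resc_partial[OF pos D l]
  using l by (intro prod.cong) (auto simp: sc_sc sc_nth algebra_simps)


lemma Kb_base:
  fixes p :: "real^'d::finite \<Rightarrow> real"
  assumes pos: "\<forall>x. p x > 0" and sp: "\<sigma> > 0" and nn: "\<forall>t. \<mu>0 t \<ge> 0" and sym: "\<forall>t. \<mu>0 (- t) = \<mu>0 t"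
  shows "Kb \<sigma> \<mu>0 p u v = Ab \<sigma> \<mu>0 (v - u) *
     min (Bb (\<lambda>i. partial i (\<lambda>z. ln (p z))) u v) (p v * Bb (\<lambda>i. partial i (\<lambda>z. ln (p z))) v u / p u)"
proof -
  have e: "Ab \<sigma> \<mu>0 (u - v) = Ab \<sigma> \<mu>0 (v - u)"
    using Ab_sym[OF sym, of \<sigma> "v - u"] by simp
  show ?thesis
    unfolding Kb_def mh_accept_def barker_AB e
    by (rule mh_form) (use pos Ab_nonneg[OF sp nn] Bb_pos in auto)
qed

lemma Kb_resc:
  fixes p :: "real^'d::finite \<Rightarrow> real"
  assumes pos: "\<forall>x. p x > 0" and sp: "\<sigma> > 0" and nn: "\<forall>t. \<mu>0 t \<ge> 0" and sym: "\<forall>t. \<mu>0 (- t) = \<mu>0 t"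
    and D: "\<forall>x. ((\<lambda>z. ln (p z)) has_derivative blinfun_apply (D x)) (at x)" and l: "l > 0"
  shows "Kb \<sigma> \<mu>0 (rescale_density k l p) (sc k l u) (sc k l v) = Ab \<sigma> \<mu>0 (sc k l (v - u)) *
     min (Bb (\<lambda>i. partial i (\<lambda>z. ln (p z))) u v) (p v * Bb (\<lambda>i. partial i (\<lambda>z. ln (p z))) v u / p u)"
proof -
  have "sc k l (u - v) = - sc k l (v - u)"
    by (auto simp: vec_eq_iff sc_nth algebra_simps)
  then have e: "Ab \<sigma> \<mu>0 (sc k l (u - v)) = Ab \<sigma> \<mu>0 (sc k l (v - u))"
    using Ab_sym[OF sym] by simp
  have r: "(p v / l) * b / (p u / l) = p v * b / p u" for b
    using l by (simp add: field_simps)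
  show ?thesis
    unfolding Kb_def mh_accept_def barker_AB_resc[OF pos D l] e rescale_sc_sc[OF less_imp_neq[OF l, symmetric]]
    unfolding r[symmetric]
    by (rule mh_form) (use pos l Ab_nonneg[OF sp nn] Bb_pos in auto)
qed


lemma Ab_mono:
  fixes w :: "real^'d::finite" and k :: 'd
  assumes ms: "\<forall>x y :: real^'d. \<forall>l. 0 < l \<and> l < l0 \<longrightarrow>
         (\<Prod>i\<in>UNIV. \<mu>0 ((upd_coord (y - x) k (l * (y $ k - x $ k))) $ i))
           \<ge> (\<Prod>i\<in>UNIV. \<mu>0 ((y - x) $ i))"
    and l: "0 < l" "l < l0" and sp: "\<sigma> > 0"
  shows "Ab \<sigma> \<mu>0 (sc k l w) \<ge> Ab \<sigma> \<mu>0 w"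
proof -
  have "(\<Prod>i\<in>UNIV. \<mu>0 ((upd_coord ((1/\<sigma>) *\<^sub>R w - 0) k (l * (((1/\<sigma>) *\<^sub>R w) $ k - 0 $ k))) $ i))
           \<ge> (\<Prod>i\<in>UNIV. \<mu>0 (((1/\<sigma>) *\<^sub>R w - 0) $ i))"
    using ms l by blast
  moreover have "(upd_coord ((1/\<sigma>) *\<^sub>R w - 0) k (l * (((1/\<sigma>) *\<^sub>R w) $ k - 0 $ k))) $ i = sc k l w $ i / \<sigma>" for i
    by (simp add: upd_coord_def sc_nth)
  moreover have "((1/\<sigma>) *\<^sub>R w - 0) $ i = w $ i / \<sigma>" for i by simp
  ultimately have le: "(\<Prod>i\<in>UNIV. \<mu>0 (w $ i / \<sigma>)) \<le> (\<Prod>i\<in>UNIV. \<mu>0 (sc k l w $ i / \<sigma>))"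
    by simp
  have A: "Ab \<sigma> \<mu>0 z = (2/\<sigma>) ^ CARD('d) * (\<Prod>i\<in>UNIV. \<mu>0 (z $ i / \<sigma>))" for z :: "real^'d"
    unfolding Ab_def prod.distrib by simp
  show ?thesis unfolding A using le sp by (intro mult_left_mono) auto
qed


definition Dir :: "(real^'d::finite \<Rightarrow> real) \<Rightarrow> (real^'d \<Rightarrow> real^'d \<Rightarrow> real) \<Rightarrow> (real^'d \<Rightarrow> real) \<Rightarrow> ennreal" where
  "Dir p K f = (\<integral>\<^sup>+x. ennreal (p x) * (\<integral>\<^sup>+y. ennreal ((f y - f x)\<^sup>2) * ennreal (K x y) \<partial>lborel) \<partial>lborel)"

lemma gap_Dir:
  fixes p :: "real^'d::finite \<Rightarrow> real"
  assumes "\<And>x. (\<lambda>y. Kb \<sigma> \<mu>0 p x y) \<in> borel_measurable borel"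
  shows "spectral_gap p (mh_kernel p (barker_q \<sigma> \<mu>0 p)) = (INF f\<in>L2_01 p. (1/2) * Dir p (Kb \<sigma> \<mu>0 p) f)"
  unfolding spectral_gap_def Dir_def
proof (rule INF_cong[OF refl])
  fix f assume "f \<in> L2_01 p"
  then have [measurable]: "f \<in> borel_measurable borel" by (simp add: L2_01_def Let_def)
  have "(\<integral>\<^sup>+ y. ennreal ((f y - f x)\<^sup>2) \<partial>mh_kernel p (barker_q \<sigma> \<mu>0 p) x)
     = (\<integral>\<^sup>+ y. ennreal ((f y - f x)\<^sup>2) * ennreal (Kb \<sigma> \<mu>0 p x y) \<partial>lborel)" for x
    unfolding Kb_def by (rule kernel_nn_integral) (use assms[of x] in \<open>auto simp: Kb_def\<close>)
  then show "(1/2) * (\<integral>\<^sup>+ x. ennreal (p x) * (\<integral>\<^sup>+ y. ennreal ((f y - f x)\<^sup>2) \<partial>mh_kernel p (barker_q \<sigma> \<mu>0 p) x) \<partial>lborel)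
     = (1/2) * (\<integral>\<^sup>+x. ennreal (p x) * (\<integral>\<^sup>+y. ennreal ((f y - f x)\<^sup>2) * ennreal (Kb \<sigma> \<mu>0 p x y) \<partial>lborel) \<partial>lborel)"
    by simp
qed


lemma resc_partial_meas:
  fixes p :: "real^'d::finite \<Rightarrow> real"
  assumes pos: "\<forall>x. p x > 0" and D: "\<forall>x. ((\<lambda>z. ln (p z)) has_derivative blinfun_apply (D x)) (at x)"
    and Dc: "continuous_on UNIV D" and l: "l > 0"
  shows "partial i (\<lambda>z. ln (rescale_density k l p z)) \<in> borel_measurable borel"
proof -
  have [measurable]: "partial i (\<lambda>z. ln (p z)) \<in> borel_measurable borel"
    by (rule partial_blinfun_meas[OF D Dc])
  have "partial i (\<lambda>z. ln (rescale_density k l p z)) = (\<lambda>z. (if i = k then 1/l else 1) * partial i (\<lambda>z. ln (p z)) (sc k (1/l) z))"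
    using resc_partial[OF pos D l] by auto
  then show ?thesis by simp
qed

lemma Kb_ge:
  fixes p :: "real^'d::finite \<Rightarrow> real"
  assumes pos: "\<forall>x. p x > 0" and sp: "\<sigma> > 0" and nn: "\<forall>t. \<mu>0 t \<ge> 0" and sym: "\<forall>t. \<mu>0 (- t) = \<mu>0 t"
    and D: "\<forall>x. ((\<lambda>z. ln (p z)) has_derivative blinfun_apply (D x)) (at x)" and l: "l > 0"
    and Am: "\<forall>w. Ab \<sigma> \<mu>0 w \<le> Ab \<sigma> \<mu>0 (sc k l w)"
  shows "Kb \<sigma> \<mu>0 p u v \<le> Kb \<sigma> \<mu>0 (rescale_density k l p) (sc k l u) (sc k l v)"
  unfolding Kb_base[OF pos sp nn sym] Kb_resc[OF pos sp nn sym D l]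
proof (rule mult_right_mono)
  show "Ab \<sigma> \<mu>0 (v - u) \<le> Ab \<sigma> \<mu>0 (sc k l (v - u))" using Am by blast
  show "0 \<le> min (Bb (\<lambda>i. partial i (\<lambda>z. ln (p z))) u v) (p v * Bb (\<lambda>i. partial i (\<lambda>z. ln (p z))) v u / p u)"
    using pos Bb_pos[of "\<lambda>i. partial i (\<lambda>z. ln (p z))" u v] Bb_pos[of "\<lambda>i. partial i (\<lambda>z. ln (p z))" v u]
    by (simp add: less_imp_le)
qed

lemma lower_Dir:
  fixes p :: "real^'d::finite \<Rightarrow> real" and k :: 'd
  assumes pos: "\<forall>x. p x > 0" and pm[measurable]: "p \<in> borel_measurable borel"
    and sp: "\<sigma> > 0" and nn: "\<forall>t. \<mu>0 t \<ge> 0" and sym: "\<forall>t. \<mu>0 (- t) = \<mu>0 t"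
    and mm[measurable]: "\<mu>0 \<in> borel_measurable borel"
    and D: "\<forall>x. ((\<lambda>z. ln (p z)) has_derivative blinfun_apply (D x)) (at x)" and Dc: "continuous_on UNIV D"
    and l: "l > 0"
    and Am: "\<forall>w. Ab \<sigma> \<mu>0 w \<le> Ab \<sigma> \<mu>0 (sc k l w)"
    and fm[measurable]: "f \<in> borel_measurable borel"
  shows "ennreal l * Dir p (Kb \<sigma> \<mu>0 p) (\<lambda>u. f (sc k l u)) \<le> Dir (rescale_density k l p) (Kb \<sigma> \<mu>0 (rescale_density k l p)) f"
proof -
  define pl where "pl = rescale_density k l p"
  have [measurable]: "pl \<in> borel_measurable borel" unfolding pl_def by measurable
  have [measurable]: "partial i (\<lambda>z. ln (pl z)) \<in> borel_measurable borel" for i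
    unfolding pl_def by (rule resc_partial_meas[OF pos D Dc l])
  have KM[measurable]: "(\<lambda>xy. Kb \<sigma> \<mu>0 pl (fst xy) (snd xy)) \<in> borel_measurable (lborel \<Otimes>\<^sub>M lborel)"
    by (rule Kb_meas) auto
  define H where "H x y = ennreal ((f y - f x)\<^sup>2) * ennreal (Kb \<sigma> \<mu>0 pl x y)" for x y
  have HM: "(\<lambda>xy. H (fst xy) (snd xy)) \<in> borel_measurable (lborel \<Otimes>\<^sub>M lborel)"
    unfolding H_def by measurable
  have Hy[measurable]: "H x \<in> borel_measurable borel" for x
    using measurable_Pair2[OF HM, of x] by simp
  have Hx[measurable]: "(\<lambda>x. ennreal (pl x) * (\<integral>\<^sup>+y. H x y \<partial>lborel)) \<in> borel_measurable borel"
  proof -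
    have "(\<lambda>x. \<integral>\<^sup>+y. H x y \<partial>lborel) \<in> borel_measurable lborel"
      by (rule lborel.borel_measurable_nn_integral) (use HM in \<open>simp add: case_prod_beta'\<close>)
    then show ?thesis by simp
  qed
  have inner: "(\<integral>\<^sup>+y. H x y \<partial>lborel) = ennreal l * (\<integral>\<^sup>+v. H x (sc k l v) \<partial>lborel)" for x
    by (rule nn_integral_sc[OF l Hy])
  have "Dir pl (Kb \<sigma> \<mu>0 pl) f = (\<integral>\<^sup>+x. ennreal (pl x) * (\<integral>\<^sup>+y. H x y \<partial>lborel) \<partial>lborel)"
    unfolding Dir_def H_def ..
  also have "\<dots> = ennreal l * (\<integral>\<^sup>+u. ennreal (pl (sc k l u)) * (\<integral>\<^sup>+y. H (sc k l u) y \<partial>lborel) \<partial>lborel)"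
    by (rule nn_integral_sc[OF l Hx])
  also have "\<dots> = ennreal l * (\<integral>\<^sup>+u. ennreal (p u) * (\<integral>\<^sup>+v. H (sc k l u) (sc k l v) \<partial>lborel) \<partial>lborel)"
  proof -
    have "ennreal (pl (sc k l u)) * (ennreal l * X) = ennreal (p u) * X" for u X
    proof -
      have "ennreal (pl (sc k l u)) * ennreal l = ennreal (p u)"
        using l pos unfolding pl_def rescale_sc_sc[OF less_imp_neq[OF l, symmetric]]
        by (simp add: ennreal_mult[symmetric] less_imp_le)
      then show ?thesis by (metis mult.assoc)
    qed
    then show ?thesis unfolding inner by simp
  qed
  also have "\<dots> \<ge> ennreal l * Dir p (Kb \<sigma> \<mu>0 p) (\<lambda>u. f (sc k l u))"
    unfolding Dir_def H_def pl_def
    by (intro mult_left_mono nn_integral_mono ennreal_leI Kb_ge[OF pos sp nn sym D l Am] mult_left_mono) auto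
  finally show ?thesis unfolding pl_def .
qed


lemma mh_bounds:
  fixes p :: "'a \<Rightarrow> real"
  assumes "p x > 0" "p y > 0" "q x y \<ge> 0" "q y x \<ge> 0"
  shows "q x y * mh_accept p q x y \<ge> 0" "q x y * mh_accept p q x y \<le> q x y"
    "p x * (q x y * mh_accept p q x y) \<le> p y * q y x"
proof -
  have r: "p y * q y x / (p x * q x y) \<ge> 0" using assms by simp
  show "q x y * mh_accept p q x y \<ge> 0" unfolding mh_accept_def using assms r by simp
  show "q x y * mh_accept p q x y \<le> q x y" unfolding mh_accept_def
    using assms by (intro mult_left_le) auto
  show "p x * (q x y * mh_accept p q x y) \<le> p y * q y x"
  proof (cases "q x y = 0")
    case True then show ?thesis using assms by (simp add: mh_accept_def)
  next
    case False
    then have "q x y > 0" using assms by simp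
    have "p x * (q x y * mh_accept p q x y) \<le> p x * (q x y * (p y * q y x / (p x * q x y)))"
      unfolding mh_accept_def using assms \<open>q x y > 0\<close> by (intro mult_left_mono) auto
    also have "\<dots> = p y * q y x" using assms \<open>q x y > 0\<close> by (simp add: field_simps)
    finally show ?thesis .
  qed
qed

lemma barker_bounds:
  assumes sp: "\<sigma> > 0" and nn: "\<forall>t. \<mu>0 t \<ge> 0" and M: "\<forall>t. \<mu>0 t \<le> M"
  shows "barker_q \<sigma> \<mu>0 p x y \<ge> 0" "barker_q \<sigma> \<mu>0 p x (y::real^'d::finite) \<le> (2 * M / \<sigma>) ^ CARD('d)"
proof -
  show "barker_q \<sigma> \<mu>0 p x y \<ge> 0" unfolding barker_q_def using sp nn
    by (intro prod_nonneg) (auto intro!: divide_nonneg_pos add_pos_pos)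
  have "barker_q \<sigma> \<mu>0 p x y \<le> (\<Prod>i\<in>(UNIV::'d set). 2 * M / \<sigma>)"
    unfolding barker_q_def
  proof (intro prod_mono conjI)
    fix i
    have d: "1 \<le> 1 + exp (- partial i (\<lambda>z. ln (p z)) x * (y $ i - x $ i))" by simp
    have n: "0 \<le> 2 / \<sigma> * \<mu>0 ((y $ i - x $ i) / \<sigma>)" using sp nn by simp
    show "0 \<le> 2 / \<sigma> * \<mu>0 ((y $ i - x $ i) / \<sigma>) / (1 + exp (- partial i (\<lambda>z. ln (p z)) x * (y $ i - x $ i)))"
      using n by (intro divide_nonneg_pos) (auto intro: add_pos_pos)
    have "2 / \<sigma> * \<mu>0 ((y $ i - x $ i) / \<sigma>) / (1 + exp (- partial i (\<lambda>z. ln (p z)) x * (y $ i - x $ i)))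
        \<le> 2 / \<sigma> * \<mu>0 ((y $ i - x $ i) / \<sigma>)"
    proof -
      have "0 < (1 + exp (- partial i (\<lambda>z. ln (p z)) x * (y $ i - x $ i))) * 1"
        by (simp add: add_pos_pos)
      from divide_left_mono[OF d n this] show ?thesis by (simp only: div_by_1)
    qed
    also have "\<dots> \<le> 2 * M / \<sigma>" using sp M by (simp add: divide_right_mono mult_left_mono)
    finally show "2 / \<sigma> * \<mu>0 ((y $ i - x $ i) / \<sigma>) / (1 + exp (- partial i (\<lambda>z. ln (p z)) x * (y $ i - x $ i))) \<le> 2 * M / \<sigma>" .
  qed
  then show "barker_q \<sigma> \<mu>0 p x y \<le> (2 * M / \<sigma>) ^ CARD('d)" by simp
qed


lemma upper_Dir:
  fixes p :: "real^'d::finite \<Rightarrow> real"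
  assumes pos: "\<forall>x. p x > 0" and pm[measurable]: "p \<in> borel_measurable borel"
    and p1: "(\<integral>\<^sup>+ x. ennreal (p x) \<partial>lborel) = 1"
    and Km[measurable]: "\<And>x. (\<lambda>y. Kb \<sigma> \<mu>0 p x y) \<in> borel_measurable borel"
    and sp: "\<sigma> > 0" and nn: "\<forall>t. \<mu>0 t \<ge> 0" and M: "\<forall>t. \<mu>0 t \<le> M"
    and fm[measurable]: "f \<in> borel_measurable borel"
  shows "Dir p (Kb \<sigma> \<mu>0 p) f \<le> ennreal (4 * (2 * M / \<sigma>) ^ CARD('d)) * (\<integral>\<^sup>+y. ennreal ((f y)\<^sup>2) \<partial>lborel)"
proof -
  have p0: "p z \<ge> 0" for z using pos[rule_format, of z] by simp
  define Q where "Q = (2 * M / \<sigma>) ^ CARD('d)"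
  define F where "F = (\<integral>\<^sup>+y. ennreal ((f y)\<^sup>2) \<partial>lborel)"
  define C where "C = ennreal (2 * Q)"
  have M0: "M \<ge> 0" using nn M by (meson order_trans)
  have Q0: "Q \<ge> 0" unfolding Q_def using M0 sp by simp
  have qb: "barker_q \<sigma> \<mu>0 p x y \<ge> 0" "barker_q \<sigma> \<mu>0 p x y \<le> Q" for x y
    using barker_bounds[OF sp nn M] unfolding Q_def by auto
  have Kb: "Kb \<sigma> \<mu>0 p x y \<ge> 0" "Kb \<sigma> \<mu>0 p x y \<le> Q" "p x * Kb \<sigma> \<mu>0 p x y \<le> p y * Q" for x y
  proof -
    note mb = mh_bounds[of p x y "barker_q \<sigma> \<mu>0 p", OF pos[rule_format] pos[rule_format] qb(1) qb(1)]
    show "Kb \<sigma> \<mu>0 p x y \<ge> 0" using mb(1) by (simp add: Kb_def)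
    show "Kb \<sigma> \<mu>0 p x y \<le> Q" using mb(2) qb(2)[of x y] by (simp add: Kb_def)
    show "p x * Kb \<sigma> \<mu>0 p x y \<le> p y * Q"
      using mb(3) mult_left_mono[OF qb(2)[of y x] less_imp_le[OF pos[rule_format, of y]]] by (simp add: Kb_def)
  qed
  have pw: "p x * ((f y - f x)\<^sup>2 * Kb \<sigma> \<mu>0 p x y) \<le> 2 * Q * (f x)\<^sup>2 * p y + 2 * Q * p x * (f y)\<^sup>2" for x y
  proof -
    let ?K = "Kb \<sigma> \<mu>0 p x y"
    have a: "(f y - f x)\<^sup>2 \<le> 2 * (f x)\<^sup>2 + 2 * (f y)\<^sup>2"
    proof -
      have e: "2 * (f x)\<^sup>2 + 2 * (f y)\<^sup>2 - (f y - f x)\<^sup>2 = (f x + f y)\<^sup>2"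
        by (simp add: power2_eq_square algebra_simps)
      show ?thesis using e zero_le_power2[of "f x + f y"] by linarith
    qed
    have pk: "p x * ?K \<ge> 0" using Kb(1)[of x y] pos[rule_format, of x] by simp
    have "p x * ((f y - f x)\<^sup>2 * ?K) = (f y - f x)\<^sup>2 * (p x * ?K)" by (simp add: ac_simps)
    also have "\<dots> \<le> (2 * (f x)\<^sup>2 + 2 * (f y)\<^sup>2) * (p x * ?K)" by (rule mult_right_mono[OF a pk])
    also have "\<dots> = 2 * (f x)\<^sup>2 * (p x * ?K) + 2 * (f y)\<^sup>2 * (p x * ?K)" by (simp add: algebra_simps)
    also have "\<dots> \<le> 2 * (f x)\<^sup>2 * (p y * Q) + 2 * (f y)\<^sup>2 * (p x * Q)"
      using Kb(2)[of x y] Kb(3)[of x y] p0[of x]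
      by (intro add_mono mult_left_mono) auto
    finally show ?thesis by (simp add: ac_simps)
  qed
  have inner: "ennreal (p x) * (\<integral>\<^sup>+y. ennreal ((f y - f x)\<^sup>2) * ennreal (Kb \<sigma> \<mu>0 p x y) \<partial>lborel)
      \<le> C * ennreal ((f x)\<^sup>2) + C * ennreal (p x) * F" for x
  proof -
    have "ennreal (p x) * (\<integral>\<^sup>+y. ennreal ((f y - f x)\<^sup>2) * ennreal (Kb \<sigma> \<mu>0 p x y) \<partial>lborel)
        = (\<integral>\<^sup>+y. ennreal (p x) * (ennreal ((f y - f x)\<^sup>2) * ennreal (Kb \<sigma> \<mu>0 p x y)) \<partial>lborel)"
      by (rule nn_integral_cmult[symmetric]) measurable
    also have "\<dots> = (\<integral>\<^sup>+y. ennreal (p x * ((f y - f x)\<^sup>2 * Kb \<sigma> \<mu>0 p x y)) \<partial>lborel)"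
      using pos Kb(1) by (intro nn_integral_cong) (simp add: ennreal_mult less_imp_le)
    also have "\<dots> \<le> (\<integral>\<^sup>+y. (C * ennreal ((f x)\<^sup>2)) * ennreal (p y) + (C * ennreal (p x)) * ennreal ((f y)\<^sup>2) \<partial>lborel)"
    proof (intro nn_integral_mono)
      fix y
      have "ennreal (p x * ((f y - f x)\<^sup>2 * Kb \<sigma> \<mu>0 p x y)) \<le> ennreal (2 * Q * (f x)\<^sup>2 * p y + 2 * Q * p x * (f y)\<^sup>2)"
        by (rule ennreal_leI[OF pw])
      also have "\<dots> = (C * ennreal ((f x)\<^sup>2)) * ennreal (p y) + (C * ennreal (p x)) * ennreal ((f y)\<^sup>2)"
        unfolding C_def using Q0 pos
        by (simp add: ennreal_plus ennreal_mult less_imp_le mult_nonneg_nonneg)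
      finally show "ennreal (p x * ((f y - f x)\<^sup>2 * Kb \<sigma> \<mu>0 p x y)) \<le> (C * ennreal ((f x)\<^sup>2)) * ennreal (p y) + (C * ennreal (p x)) * ennreal ((f y)\<^sup>2)" .
    qed
    also have "\<dots> = (C * ennreal ((f x)\<^sup>2)) * (\<integral>\<^sup>+y. ennreal (p y) \<partial>lborel) + (C * ennreal (p x)) * F"
      unfolding F_def by (subst nn_integral_add) (auto simp: nn_integral_cmult)
    finally show ?thesis using p1 by simp
  qed
  have "Dir p (Kb \<sigma> \<mu>0 p) f \<le> (\<integral>\<^sup>+x. C * ennreal ((f x)\<^sup>2) + (C * F) * ennreal (p x) \<partial>lborel)"
    unfolding Dir_def by (intro nn_integral_mono order_trans[OF inner]) (simp add: ac_simps)
  also have "\<dots> = C * F + (C * F) * 1"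
    unfolding F_def by (subst nn_integral_add) (auto simp: nn_integral_cmult p1)
  also have "\<dots> = ennreal (4 * Q) * F"
  proof -
    have "ennreal (2 * Q) + ennreal (2 * Q) = ennreal (4 * Q)" using Q0 by (simp add: ennreal_plus[symmetric])
    then show ?thesis unfolding C_def by (simp add: distrib_right[symmetric])
  qed
  finally show ?thesis unfolding Q_def F_def .
qed


lemma pos_mass:
  fixes p :: "real^'d::finite \<Rightarrow> real"
  assumes pos: "\<forall>x. p x > 0" and pm[measurable]: "p \<in> borel_measurable borel" and r: "r > 0"
  shows "emeasure (density lborel (\<lambda>x. ennreal (p x))) (ball c r) > 0"
proof (rule ccontr)
  assume "\<not> ?thesis"
  have [measurable]: "ball c r \<in> sets borel" by simp
  from \<open>\<not> ?thesis\<close> have "(\<integral>\<^sup>+x. ennreal (p x) * indicator (ball c r) x \<partial>lborel) = 0"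
    by (simp add: emeasure_density)
  then have "AE x in lborel. ennreal (p x) * indicator (ball c r) x = 0"
    by (subst (asm) nn_integral_0_iff_AE) auto
  then have "AE x in lborel. x \<notin> ball c r"
  proof eventually_elim
    fix x assume "ennreal (p x) * indicator (ball c r) x = 0"
    moreover have "p x > 0" using pos by simp
    ultimately show "x \<notin> ball c r" by (auto split: split_indicator)
  qed
  then have "emeasure lborel (ball c r) = 0"
    by (subst (asm) AE_iff_measurable[of "ball c r"]) auto
  then have "measure lborel (ball c r) = 0" by (simp add: measure_def)
  then show False using content_ball_pos[OF r, of c] by simp
qed

lemma exists_test:
  fixes p :: "real^'d::finite \<Rightarrow> real"
  assumes pos: "\<forall>x. p x > 0" and pm[measurable]: "p \<in> borel_measurable borel"
    and p1: "(\<integral>\<^sup>+ x. ennreal (p x) \<partial>lborel) = 1"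
  shows "\<exists>g. g \<in> L2_01 p \<and> (\<integral>\<^sup>+u. ennreal ((g u)\<^sup>2) \<partial>lborel) < \<infinity>"
proof -
  define M where "M = density lborel (\<lambda>x. ennreal (p x))"
  have sM[simp, measurable_cong]: "sets M = sets borel" and spM[simp]: "space M = UNIV" unfolding M_def by auto
  have MU: "emeasure M UNIV = 1" unfolding M_def using p1 by (simp add: emeasure_density)
  interpret finite_measure M by (rule finite_measureI) (simp add: MU)
  obtain c :: "real^'d" where c: "norm c = 3" using vector_choose_size[of 3] by auto
  define A where "A = ball (0::real^'d) 1"
  define B where "B = ball c 1"
  have [measurable]: "A \<in> sets borel" "B \<in> sets borel" unfolding A_def B_def by auto
  have disj: "x \<in> A \<Longrightarrow> x \<notin> B" for x
  proof
    assume "x \<in> A" "x \<in> B"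
    then have "norm x < 1" "dist c x < 1" unfolding A_def B_def by (auto simp: dist_norm)
    then have "norm c < 2" using norm_triangle_ineq[of "c - x" x] by (simp add: dist_norm)
    then show False using c by simp
  qed
  define pA where "pA = measure M A"
  define pB where "pB = measure M B"
  have eA: "emeasure M A = ennreal pA" unfolding pA_def by (simp add: emeasure_eq_measure)
  have eB: "emeasure M B = ennreal pB" unfolding pB_def by (simp add: emeasure_eq_measure)
  have pA: "pA > 0"
    using pos_mass[OF pos pm, of 1 0] eA unfolding M_def A_def by (simp add: ennreal_less_zero_iff)
  have pB: "pB > 0"
    using pos_mass[OF pos pm, of 1 c] eB unfolding M_def B_def by (simp add: ennreal_less_zero_iff)
  define t where "t = 1 / sqrt (1/pA + 1/pB)"
  define a where "a = t / pA"
  define b where "b = t / pB"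
  define g where "g x = a * indicator A x - b * indicator B x" for x
  have g2: "(g x)\<^sup>2 = a\<^sup>2 * indicator A x + b\<^sup>2 * indicator B x" for x
    using disj[of x] unfolding g_def by (auto simp: power2_eq_square split: split_indicator)
  have [measurable]: "g \<in> borel_measurable borel" unfolding g_def by measurable
  have iA: "integrable M (indicator A :: _ \<Rightarrow> real)" "integrable M (indicator B :: _ \<Rightarrow> real)"
    by (auto simp: eA eB)
  have ig: "integrable M g" unfolding g_def using iA by auto
  have ig2: "integrable M (\<lambda>x. (g x)\<^sup>2)" unfolding g2 using iA by auto
  have t2: "t\<^sup>2 * (1/pA + 1/pB) = 1"
  proof -
    have "1/pA + 1/pB > 0" using pA pB by (intro add_pos_pos) auto
    then show ?thesis unfolding t_def by (simp add: power_divide)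
  qed
  have int0: "integral\<^sup>L M g = 0"
    unfolding g_def using iA pA pB by (simp add: pA_def[symmetric] pB_def[symmetric] a_def b_def)
  have int1: "integral\<^sup>L M (\<lambda>x. (g x - integral\<^sup>L M g)\<^sup>2) = 1"
  proof -
    have "integral\<^sup>L M (\<lambda>x. (g x - integral\<^sup>L M g)\<^sup>2) = a\<^sup>2 * pA + b\<^sup>2 * pB"
      unfolding int0 using iA by (simp add: g2 pA_def pB_def)
    also have "\<dots> = t\<^sup>2 * (1/pA + 1/pB)"
      unfolding a_def b_def using pA pB by (simp add: power2_eq_square field_simps)
    finally show ?thesis using t2 by simp
  qed
  have "g \<in> L2_01 p"
    unfolding L2_01_def Let_def M_def[symmetric] using ig ig2 int0 int1 by simp
  moreover have "(\<integral>\<^sup>+u. ennreal ((g u)\<^sup>2) \<partial>lborel) < \<infinity>"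
  proof -
    have "(\<integral>\<^sup>+u. ennreal ((g u)\<^sup>2) \<partial>lborel) = (\<integral>\<^sup>+u. ennreal (a\<^sup>2) * indicator A u + ennreal (b\<^sup>2) * indicator B u \<partial>lborel)"
      unfolding g2 by (intro nn_integral_cong) (auto split: split_indicator)
    also have "\<dots> = ennreal (a\<^sup>2) * emeasure lborel A + ennreal (b\<^sup>2) * emeasure lborel B"
      by (subst nn_integral_add) (auto simp: nn_integral_cmult)
    also have "\<dots> < \<infinity>"
      unfolding A_def B_def using emeasure_lborel_ball_finite[of "0::real^'d" 1] emeasure_lborel_ball_finite[of c 1]
      by (simp add: ennreal_mult_less_top less_top)
    finally show ?thesis .
  qed
  ultimately show ?thesis by blast
qed

theorem theorem4p1:
  fixes \<pi> :: "real^'d \<Rightarrow> real" and \<mu>0 :: "real \<Rightarrow> real" and \<sigma> :: real and k :: 'd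
  assumes pi_pos: "\<forall>x. \<pi> x > 0"
    and pi_meas: "\<pi> \<in> borel_measurable borel"
    and pi_prob: "(\<integral>\<^sup>+ x. ennreal (\<pi> x) \<partial>lborel) = 1"
    and logpi_C1: "\<exists>D :: real^'d \<Rightarrow> ((real^'d) \<Rightarrow>\<^sub>L real).
         (\<forall>x. ((\<lambda>z. ln (\<pi> z)) has_derivative blinfun_apply (D x)) (at x)) \<and> continuous_on UNIV D"
    and mu0_nonneg: "\<forall>t. \<mu>0 t \<ge> 0"
    and mu0_meas: "\<mu>0 \<in> borel_measurable borel"
    and mu0_prob: "(\<integral>\<^sup>+ t. ennreal (\<mu>0 t) \<partial>lborel) = 1"
    and mu0_symm: "\<forall>t. \<mu>0 (- t) = \<mu>0 t"
    and mu_scale: "\<exists>l0>0. \<forall>x y :: real^'d. \<forall>l. 0 < l \<and> l < l0 \<longrightarrow>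
         (\<Prod>i\<in>UNIV. \<mu>0 ((upd_coord (y - x) k (l * (y $ k - x $ k))) $ i))
           \<ge> (\<Prod>i\<in>UNIV. \<mu>0 ((y - x) $ i))"
    and marg_bdd: "bdd_above (range \<mu>0)"
    and sigma_pos: "\<sigma> > 0"
    and gap_pos: "spectral_gap \<pi> (mh_kernel \<pi> (barker_q \<sigma> \<mu>0 \<pi>)) > 0"
  shows "Liminf (at_right 0) (\<lambda>l. spectral_gap (rescale_density k l \<pi>)
             (mh_kernel (rescale_density k l \<pi>) (barker_q \<sigma> \<mu>0 (rescale_density k l \<pi>))) / ennreal l) > 0
       \<and> Limsup (at_right 0) (\<lambda>l. spectral_gap (rescale_density k l \<pi>)
             (mh_kernel (rescale_density k l \<pi>) (barker_q \<sigma> \<mu>0 (rescale_density k l \<pi>))) / ennreal l) < \<infinity>"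
proof -
  from logpi_C1 obtain D :: "real^'d \<Rightarrow> ((real^'d) \<Rightarrow>\<^sub>L real)"
    where D: "\<forall>x. ((\<lambda>z. ln (\<pi> z)) has_derivative blinfun_apply (D x)) (at x)" and Dc: "continuous_on UNIV D"
    by blast
  from mu_scale obtain l0 where l0: "l0 > 0" and ms: "\<forall>x y :: real^'d. \<forall>l. 0 < l \<and> l < l0 \<longrightarrow>
         (\<Prod>i\<in>UNIV. \<mu>0 ((upd_coord (y - x) k (l * (y $ k - x $ k))) $ i))
           \<ge> (\<Prod>i\<in>UNIV. \<mu>0 ((y - x) $ i))" by blast
  from marg_bdd obtain M where M: "\<forall>t. \<mu>0 t \<le> M" by (auto simp: bdd_above_def)
  note [measurable] = pi_meas mu0_meas
  have pm0[measurable]: "partial i (\<lambda>z. ln (\<pi> z)) \<in> borel_measurable borel" for i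
    by (rule partial_blinfun_meas[OF D Dc])
  have Km0: "(\<lambda>y. Kb \<sigma> \<mu>0 \<pi> x y) \<in> borel_measurable borel" for x
    by (rule Kb_meas2) auto
  have Kml: "(\<lambda>y. Kb \<sigma> \<mu>0 (rescale_density k l \<pi>) x y) \<in> borel_measurable borel" if l: "l > 0" for x l
    by (rule Kb_meas2) (auto intro: resc_partial_meas[OF pi_pos D Dc l])
  define G where "G = spectral_gap \<pi> (mh_kernel \<pi> (barker_q \<sigma> \<mu>0 \<pi>))"
  define Gl where "Gl l = spectral_gap (rescale_density k l \<pi>)
             (mh_kernel (rescale_density k l \<pi>) (barker_q \<sigma> \<mu>0 (rescale_density k l \<pi>)))" for l
  have G: "G = (INF f\<in>L2_01 \<pi>. (1/2) * Dir \<pi> (Kb \<sigma> \<mu>0 \<pi>) f)"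
    unfolding G_def by (rule gap_Dir[OF Km0])
  have Gl: "Gl l = (INF f\<in>L2_01 (rescale_density k l \<pi>). (1/2) * Dir (rescale_density k l \<pi>) (Kb \<sigma> \<mu>0 (rescale_density k l \<pi>)) f)"
    if "l > 0" for l
    unfolding Gl_def by (rule gap_Dir[OF Kml[OF that]])
  have low: "G \<le> Gl l / ennreal l" if l: "0 < l" "l < l0" for l
  proof -
    have Am: "\<forall>w. Ab \<sigma> \<mu>0 w \<le> Ab \<sigma> \<mu>0 (sc k l w)"
      using Ab_mono[OF ms l sigma_pos] by blast
    have "ennreal l * G \<le> Gl l"
      unfolding Gl[OF l(1)]
    proof (rule INF_greatest)
      fix f assume f: "f \<in> L2_01 (rescale_density k l \<pi>)"
      then have fm[measurable]: "f \<in> borel_measurable borel" by (simp add: L2_01_def Let_def)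
      have g: "(\<lambda>u. f (sc k l u)) \<in> L2_01 \<pi>"
        using L2_transfer[OF pi_meas l(1) fm] f by simp
      have "ennreal l * G \<le> ennreal l * ((1/2) * Dir \<pi> (Kb \<sigma> \<mu>0 \<pi>) (\<lambda>u. f (sc k l u)))"
        unfolding G by (intro mult_left_mono INF_lower g) auto
      also have "\<dots> = (1/2) * (ennreal l * Dir \<pi> (Kb \<sigma> \<mu>0 \<pi>) (\<lambda>u. f (sc k l u)))"
        by (simp add: ac_simps)
      also have "\<dots> \<le> (1/2) * Dir (rescale_density k l \<pi>) (Kb \<sigma> \<mu>0 (rescale_density k l \<pi>)) f"
        by (intro mult_left_mono lower_Dir[OF pi_pos pi_meas sigma_pos mu0_nonneg mu0_symm mu0_meas D Dc l(1) Am fm]) auto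
      finally show "ennreal l * G \<le> (1/2) * Dir (rescale_density k l \<pi>) (Kb \<sigma> \<mu>0 (rescale_density k l \<pi>)) f" .
    qed
    then have "ennreal l * G / ennreal l \<le> Gl l / ennreal l" by (rule divide_right_mono_ennreal)
    moreover have "ennreal l * G / ennreal l = G"
      using l by (subst mult.commute, intro mult_divide_eq_ennreal) auto
    ultimately show ?thesis by simp
  qed
  have ev1: "eventually (\<lambda>l. G \<le> Gl l / ennreal l) (at_right (0::real))"
    unfolding eventually_at_right_field using l0 low by blast
  have part1: "Liminf (at_right 0) (\<lambda>l. Gl l / ennreal l) > 0"
    using Liminf_bounded[OF ev1] gap_pos unfolding G_def by (meson less_le_trans)
  obtain g where g: "g \<in> L2_01 \<pi>" and gfin: "(\<integral>\<^sup>+u. ennreal ((g u)\<^sup>2) \<partial>lborel) < \<infinity>"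
    using exists_test[OF pi_pos pi_meas pi_prob] by blast
  have gm[measurable]: "g \<in> borel_measurable borel" using g by (simp add: L2_01_def Let_def)
  define Gg where "Gg = (\<integral>\<^sup>+u. ennreal ((g u)\<^sup>2) \<partial>lborel)"
  define C where "C = (1/2) * ennreal (4 * (2 * M / \<sigma>) ^ CARD('d)) * Gg"
  have "(1/2::ennreal) \<le> 1" by (rule divide_le_posI_ennreal) auto
  then have half: "(1/2::ennreal) < top" using le_less_trans by fastforce
  have Cfin: "C < \<infinity>" unfolding C_def Gg_def using gfin half
    by (simp add: ennreal_mult_less_top)
  have up: "Gl l / ennreal l \<le> C" if l: "l > 0" for l
  proof -
    define f where "f x = g (sc k (1/l) x)" for x
    have fm[measurable]: "f \<in> borel_measurable borel" unfolding f_def by measurable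
    have fL: "f \<in> L2_01 (rescale_density k l \<pi>)"
      using L2_transfer[OF pi_meas l fm] g l by (simp add: f_def sc_sc)
    have posl: "\<forall>x. rescale_density k l \<pi> x > 0" using pi_pos l by (simp add: rescale_sc)
    have p1l: "(\<integral>\<^sup>+x. ennreal (rescale_density k l \<pi> x) \<partial>lborel) = 1"
    proof -
      have "(\<integral>\<^sup>+x. ennreal (rescale_density k l \<pi> x) \<partial>lborel)
          = ennreal l * (\<integral>\<^sup>+u. ennreal (rescale_density k l \<pi> (sc k l u)) \<partial>lborel)"
        by (rule nn_integral_sc[OF l]) measurable
      also have "\<dots> = (\<integral>\<^sup>+u. ennreal l * ennreal (rescale_density k l \<pi> (sc k l u)) \<partial>lborel)"
        by (rule nn_integral_cmult[symmetric]) measurable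
      also have "\<dots> = (\<integral>\<^sup>+u. ennreal (\<pi> u) \<partial>lborel)"
        using l by (intro nn_integral_cong) (simp add: rescale_sc_sc ennreal_mult'[symmetric])
      finally show ?thesis using pi_prob by simp
    qed
    have ff: "(\<integral>\<^sup>+x. ennreal ((f x)\<^sup>2) \<partial>lborel) = ennreal l * Gg"
      unfolding Gg_def f_def using l by (subst nn_integral_sc[OF l, of _ k]) (auto simp: sc_sc)
    have "Gl l \<le> (1/2) * Dir (rescale_density k l \<pi>) (Kb \<sigma> \<mu>0 (rescale_density k l \<pi>)) f"
      unfolding Gl[OF l] by (rule INF_lower[OF fL])
    also have "\<dots> \<le> (1/2) * (ennreal (4 * (2 * M / \<sigma>) ^ CARD('d)) * (\<integral>\<^sup>+x. ennreal ((f x)\<^sup>2) \<partial>lborel))"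
      by (intro mult_left_mono upper_Dir[OF posl _ p1l Kml[OF l] sigma_pos mu0_nonneg M fm]) auto
    also have "\<dots> = C * ennreal l"
      unfolding ff C_def by (simp add: ac_simps)
    finally have "Gl l / ennreal l \<le> C * ennreal l / ennreal l" by (rule divide_right_mono_ennreal)
    also have "\<dots> = C" using l by (intro mult_divide_eq_ennreal) auto
    finally show ?thesis .
  qed
  have ev2: "eventually (\<lambda>l. Gl l / ennreal l \<le> C) (at_right (0::real))"
    using eventually_at_right_less[of "0::real"] by eventually_elim (rule up)
  have part2: "Limsup (at_right 0) (\<lambda>l. Gl l / ennreal l) < \<infinity>"
    using Limsup_bounded[OF ev2] Cfin by (meson le_less_trans)
  show ?thesis using part1 part2 unfolding Gl_def by (intro conjI)
qed

end
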